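(* Let $m$ and $\Delta$ be numbers such that $m$ and $\langle m;\Delta\rangle$ are numbers and $\langle m;\Delta\rangle$ is balanced. Then $\langle m;\Delta\rangle=m$.
   Context: Games are short normal-play combinatorial games, written $\{L\mid R\}$, with the usual disjunctive sum $+$ and equality of values. A number is a game $G$ with $G^L<G<G^R$ for all options; short number values are identified with dyadic rationals. For numbers $m,\Delta$, the ball $\langle m;\Delta\rangle$ is the game $\{x\mid y\}$ where $x$ and $y$ are the canonical forms of $m+\Delta$ and $m-\Delta$ respectively ($m$ is the midpoint, $\Delta$ the radius); balls are only considered when they are numbers, which forces $\Delta<0$. A ball $\langle m;\Delta\rangle$ is balanced if $\langle m;\Delta\rangle+\langle m;\Delta\rangle=m+m$. *)

theory Defs
  imports Complex_Main
begin

datatype game = Game "game list" "game list"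

fun lefts :: "game \<Rightarrow> game list" where "lefts (Game l r) = l"
fun rights :: "game \<Rightarrow> game list" where "rights (Game l r) = r"

function gle :: "game \<Rightarrow> game \<Rightarrow> bool" where
  "gle (Game GL GR) (Game HL HR) =
     ((\<forall>gl\<in>set GL. \<not> gle (Game HL HR) gl) \<and> (\<forall>hr\<in>set HR. \<not> gle hr (Game GL GR)))"
  by pat_completeness auto
termination
  by (relation "measure (\<lambda>(g, h). size g + size h)")
     (auto dest!: size_list_estimation'[OF _ order_refl, of _ _ size])

definition geq :: "game \<Rightarrow> game \<Rightarrow> bool" where
  "geq G H \<longleftrightarrow> gle G H \<and> gle H G"

definition glt :: "game \<Rightarrow> game \<Rightarrow> bool" where
  "glt G H \<longleftrightarrow> gle G H \<and> \<not> gle H G"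

function gplus :: "game \<Rightarrow> game \<Rightarrow> game" where
  "gplus (Game GL GR) (Game HL HR) =
     Game (map (\<lambda>gl. gplus gl (Game HL HR)) GL @ map (\<lambda>hl. gplus (Game GL GR) hl) HL)
          (map (\<lambda>gr. gplus gr (Game HL HR)) GR @ map (\<lambda>hr. gplus (Game GL GR) hr) HR)"
  by pat_completeness auto
termination
  by (relation "measure (\<lambda>(g, h). size g + size h)")
     (auto dest!: size_list_estimation'[OF _ order_refl, of _ _ size])

definition is_number :: "game \<Rightarrow> bool" where
  "is_number G \<longleftrightarrow> (\<forall>gl\<in>set (lefts G). glt gl G) \<and> (\<forall>gr\<in>set (rights G). glt G gr)"

definition is_dyadic :: "rat \<Rightarrow> bool" where
  "is_dyadic q \<longleftrightarrow> (\<exists>k::int. \<exists>j::nat. q = of_int k / 2 ^ j)"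

fun cnat :: "nat \<Rightarrow> game" where
  "cnat 0 = Game [] []"
| "cnat (Suc n) = Game [cnat n] []"

fun cnegnat :: "nat \<Rightarrow> game" where
  "cnegnat 0 = Game [] []"
| "cnegnat (Suc n) = Game [] [cnegnat n]"

definition cint :: "int \<Rightarrow> game" where
  "cint k = (if 0 \<le> k then cnat (nat k) else cnegnat (nat (- k)))"

text \<open>Canonical form of k / 2^j:
  odd k gives {(k-1)/2^j | (k+1)/2^j}, even k is reduced.\<close>
fun cfrac :: "int \<Rightarrow> nat \<Rightarrow> game" where
  "cfrac k 0 = cint k"
| "cfrac k (Suc j) =
     (if even k then cfrac (k div 2) j
      else Game [cfrac ((k - 1) div 2) j] [cfrac ((k + 1) div 2) j])"

definition dyadic_exp :: "rat \<Rightarrow> nat" where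
  "dyadic_exp q = (LEAST j. \<exists>k::int. q * 2 ^ j = of_int k)"

definition canon :: "rat \<Rightarrow> game" where
  "canon q = cfrac \<lfloor>q * 2 ^ dyadic_exp q\<rfloor> (dyadic_exp q)"

definition ball :: "rat \<Rightarrow> rat \<Rightarrow> game" where
  "ball m \<Delta> = Game [canon (m + \<Delta>)] [canon (m - \<Delta>)]"

definition balanced :: "rat \<Rightarrow> rat \<Rightarrow> bool" where
  "balanced m \<Delta> \<longleftrightarrow> geq (gplus (ball m \<Delta>) (ball m \<Delta>)) (gplus (canon m) (canon m))"

end

theory Submission
  imports Defs
begin


lemma gle_unfold:
  "gle G H \<longleftrightarrow> (\<forall>gl\<in>set (lefts G). \<not> gle H gl) \<and> (\<forall>hr\<in>set (rights H). \<not> gle hr G)"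
  by (cases G; cases H) simp

lemma size_left: "gl \<in> set (lefts G) \<Longrightarrow> size gl < size G"
  by (cases G) (auto dest!: size_list_estimation'[OF _ order_refl, of _ _ size])

lemma size_right: "gr \<in> set (rights G) \<Longrightarrow> size gr < size G"
  by (cases G) (auto dest!: size_list_estimation'[OF _ order_refl, of _ _ size])

lemma gle_refl: "gle G G"
proof (induction G)
  case (Game l r)
  show ?case
  proof (subst gle_unfold, intro conjI ballI)
    fix gl assume a: "gl \<in> set (lefts (Game l r))"
    show "\<not> gle (Game l r) gl"
    proof
      assume "gle (Game l r) gl"
      then have "\<not> gle gl gl" using a by (subst (asm) gle_unfold) auto
      moreover have "gle gl gl" using Game.IH(1) a by simp
      ultimately show False by simp
    qed
  next
    fix gr assume a: "gr \<in> set (rights (Game l r))"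
    show "\<not> gle gr (Game l r)"
    proof
      assume "gle gr (Game l r)"
      then have "\<not> gle gr gr" using a by (subst (asm) gle_unfold) auto
      moreover have "gle gr gr" using Game.IH(2) a by simp
      ultimately show False by simp
    qed
  qed
qed

lemma left_not_ge: "gl \<in> set (lefts G) \<Longrightarrow> \<not> gle G gl"
  using gle_refl[of G] by (subst (asm) gle_unfold) auto

lemma right_not_le: "gr \<in> set (rights G) \<Longrightarrow> \<not> gle gr G"
  using gle_refl[of G] by (subst (asm) gle_unfold) auto

lemma gle_trans_aux:
  "size G + size H + size K = n \<Longrightarrow> gle G H \<Longrightarrow> gle H K \<Longrightarrow> gle G K"
proof (induction n arbitrary: G H K rule: less_induct)
  case (less n)
  show ?case
  proof (subst gle_unfold, intro conjI ballI notI)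
    fix gl assume a: "gl \<in> set (lefts G)" and b: "gle K gl"
    have "gle H gl" using less.IH[OF _ refl less.prems(3) b] size_left[OF a] less.prems(1) by simp
    moreover have "\<not> gle H gl" using less.prems(2) a by (subst (asm) gle_unfold) auto
    ultimately show False by simp
  next
    fix kr assume a: "kr \<in> set (rights K)" and b: "gle kr G"
    have "gle kr H" using less.IH[OF _ refl b less.prems(2)] size_right[OF a] less.prems(1) by simp
    moreover have "\<not> gle kr H" using less.prems(3) a by (subst (asm) gle_unfold) auto
    ultimately show False by simp
  qed
qed

lemma gle_trans: "gle G H \<Longrightarrow> gle H K \<Longrightarrow> gle G K"
  using gle_trans_aux by blast

lemma lefts_plus: "lefts (gplus G X) = map (\<lambda>gl. gplus gl X) (lefts G) @ map (\<lambda>xl. gplus G xl) (lefts X)"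
  by (cases G; cases X) simp

lemma rights_plus: "rights (gplus G X) = map (\<lambda>gr. gplus gr X) (rights G) @ map (\<lambda>xr. gplus G xr) (rights X)"
  by (cases G; cases X) simp

lemma mono_left_aux:
  "size G + size H + size X = n \<Longrightarrow>
    (gle G H \<longrightarrow> gle (gplus G X) (gplus H X)) \<and> (gle (gplus G X) (gplus H X) \<longrightarrow> gle G H)"
proof (induction n arbitrary: G H X rule: less_induct)
  case (less n)
  show ?case
  proof (intro conjI impI)
    assume gh: "gle G H"
    show "gle (gplus G X) (gplus H X)"
    proof (subst gle_unfold, intro conjI ballI notI)
      fix L assume "L \<in> set (lefts (gplus G X))" and b: "gle (gplus H X) L"
      then consider gl where "gl \<in> set (lefts G)" "L = gplus gl X"
        | xl where "xl \<in> set (lefts X)" "L = gplus G xl" by (auto simp: lefts_plus)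
      then show False
      proof cases
        case 1
        have "gle H gl" using less.IH[OF _ refl, of H gl X] size_left[OF 1(1)] less.prems b 1(2) by auto
        moreover have "\<not> gle H gl" using gh 1(1) by (subst (asm) gle_unfold) auto
        ultimately show False by simp
      next
        case 2
        have "gle (gplus G xl) (gplus H xl)" using less.IH[OF _ refl, of G H xl] size_left[OF 2(1)] less.prems gh by auto
        then have "gle (gplus H X) (gplus H xl)" using b 2(2) gle_trans by blast
        moreover have "gplus H xl \<in> set (lefts (gplus H X))" using 2(1) by (simp add: lefts_plus)
        ultimately show False using left_not_ge by blast
      qed
    next
      fix R assume "R \<in> set (rights (gplus H X))" and b: "gle R (gplus G X)"
      then consider hr where "hr \<in> set (rights H)" "R = gplus hr X"
        | xr where "xr \<in> set (rights X)" "R = gplus H xr" by (auto simp: rights_plus)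
      then show False
      proof cases
        case 1
        have "gle hr G" using less.IH[OF _ refl, of hr G X] size_right[OF 1(1)] less.prems b 1(2) by auto
        moreover have "\<not> gle hr G" using gh 1(1) by (subst (asm) gle_unfold) auto
        ultimately show False by simp
      next
        case 2
        have "gle (gplus G xr) (gplus H xr)" using less.IH[OF _ refl, of G H xr] size_right[OF 2(1)] less.prems gh by auto
        then have "gle (gplus G xr) (gplus G X)" using b 2(2) gle_trans by blast
        moreover have "gplus G xr \<in> set (rights (gplus G X))" using 2(1) by (simp add: rights_plus)
        ultimately show False using right_not_le by blast
      qed
    qed
  next
    assume gh: "gle (gplus G X) (gplus H X)"
    show "gle G H"
    proof (subst gle_unfold, intro conjI ballI notI)
      fix gl assume a: "gl \<in> set (lefts G)" and b: "gle H gl"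
      have "gle (gplus H X) (gplus gl X)" using less.IH[OF _ refl, of H gl X] size_left[OF a] less.prems b by auto
      moreover have "gplus gl X \<in> set (lefts (gplus G X))" using a by (simp add: lefts_plus)
      ultimately show False using gh by (subst (asm) gle_unfold) auto
    next
      fix hr assume a: "hr \<in> set (rights H)" and b: "gle hr G"
      have "gle (gplus hr X) (gplus G X)" using less.IH[OF _ refl, of hr G X] size_right[OF a] less.prems b by auto
      moreover have "gplus hr X \<in> set (rights (gplus H X))" using a by (simp add: rights_plus)
      ultimately show False using gh by (subst (asm) gle_unfold) auto
    qed
  qed
qed

lemma mono_left: "gle G H \<Longrightarrow> gle (gplus G X) (gplus H X)"
  using mono_left_aux by blast

lemma mono_right_aux:
  "size G + size H + size X = n \<Longrightarrow>
    (gle G H \<longrightarrow> gle (gplus X G) (gplus X H)) \<and> (gle (gplus X G) (gplus X H) \<longrightarrow> gle G H)"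
proof (induction n arbitrary: G H X rule: less_induct)
  case (less n)
  show ?case
  proof (intro conjI impI)
    assume gh: "gle G H"
    show "gle (gplus X G) (gplus X H)"
    proof (subst gle_unfold, intro conjI ballI notI)
      fix L assume "L \<in> set (lefts (gplus X G))" and b: "gle (gplus X H) L"
      then consider gl where "gl \<in> set (lefts G)" "L = gplus X gl"
        | xl where "xl \<in> set (lefts X)" "L = gplus xl G" by (auto simp: lefts_plus)
      then show False
      proof cases
        case 1
        have "gle H gl" using less.IH[OF _ refl, of H gl X] size_left[OF 1(1)] less.prems b 1(2) by auto
        moreover have "\<not> gle H gl" using gh 1(1) by (subst (asm) gle_unfold) auto
        ultimately show False by simp
      next
        case 2
        have "gle (gplus xl G) (gplus xl H)" using less.IH[OF _ refl, of G H xl] size_left[OF 2(1)] less.prems gh by auto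
        then have "gle (gplus X H) (gplus xl H)" using b 2(2) gle_trans by blast
        moreover have "gplus xl H \<in> set (lefts (gplus X H))" using 2(1) by (simp add: lefts_plus)
        ultimately show False using left_not_ge by blast
      qed
    next
      fix R assume "R \<in> set (rights (gplus X H))" and b: "gle R (gplus X G)"
      then consider hr where "hr \<in> set (rights H)" "R = gplus X hr"
        | xr where "xr \<in> set (rights X)" "R = gplus xr H" by (auto simp: rights_plus)
      then show False
      proof cases
        case 1
        have "gle hr G" using less.IH[OF _ refl, of hr G X] size_right[OF 1(1)] less.prems b 1(2) by auto
        moreover have "\<not> gle hr G" using gh 1(1) by (subst (asm) gle_unfold) auto
        ultimately show False by simp
      next
        case 2
        have "gle (gplus xr G) (gplus xr H)" using less.IH[OF _ refl, of G H xr] size_right[OF 2(1)] less.prems gh by auto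
        then have "gle (gplus xr G) (gplus X G)" using b 2(2) gle_trans by blast
        moreover have "gplus xr G \<in> set (rights (gplus X G))" using 2(1) by (simp add: rights_plus)
        ultimately show False using right_not_le by blast
      qed
    qed
  next
    assume gh: "gle (gplus X G) (gplus X H)"
    show "gle G H"
    proof (subst gle_unfold, intro conjI ballI notI)
      fix gl assume a: "gl \<in> set (lefts G)" and b: "gle H gl"
      have "gle (gplus X H) (gplus X gl)" using less.IH[OF _ refl, of H gl X] size_left[OF a] less.prems b by auto
      moreover have "gplus X gl \<in> set (lefts (gplus X G))" using a by (simp add: lefts_plus)
      ultimately show False using gh by (subst (asm) gle_unfold) auto
    next
      fix hr assume a: "hr \<in> set (rights H)" and b: "gle hr G"
      have "gle (gplus X hr) (gplus X G)" using less.IH[OF _ refl, of hr G X] size_right[OF a] less.prems b by auto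
      moreover have "gplus X hr \<in> set (rights (gplus X H))" using a by (simp add: rights_plus)
      ultimately show False using gh by (subst (asm) gle_unfold) auto
    qed
  qed
qed

lemma mono_right: "gle G H \<Longrightarrow> gle (gplus X G) (gplus X H)"
  using mono_right_aux by blast

definition numlike :: "game \<Rightarrow> bool" where
  "numlike P \<longleftrightarrow> (\<forall>l\<in>set (lefts P). gle l P) \<and> (\<forall>r\<in>set (rights P). gle P r)"

lemma key:
  assumes P: "numlike P" and Q: "numlike Q" and s: "gle (gplus P P) (gplus Q Q)"
  shows "gle P Q"
proof (rule ccontr)
  assume "\<not> gle P Q"
  then consider pl where "pl \<in> set (lefts P)" "gle Q pl"
    | qr where "qr \<in> set (rights Q)" "gle qr P" by (subst (asm) gle_unfold) auto
  then show False
  proof cases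
    case 1
    have qp: "gle Q P" using 1 P gle_trans unfolding numlike_def by blast
    have "gle (gplus P Q) (gplus Q Q)" using mono_right[OF qp] s gle_trans by blast
    moreover have "gle (gplus Q Q) (gplus pl Q)" using mono_left[OF 1(2)] .
    ultimately have "gle (gplus P Q) (gplus pl Q)" using gle_trans by blast
    moreover have "gplus pl Q \<in> set (lefts (gplus P Q))" using 1(1) by (simp add: lefts_plus)
    ultimately show False using left_not_ge by blast
  next
    case 2
    have qp: "gle Q P" using 2 Q gle_trans unfolding numlike_def by blast
    have "gle (gplus P Q) (gplus Q Q)" using mono_right[OF qp] s gle_trans by blast
    moreover have "gle (gplus qr Q) (gplus P Q)" using mono_left[OF 2(2)] .
    ultimately have "gle (gplus qr Q) (gplus Q Q)" using gle_trans by blast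
    moreover have "gplus qr Q \<in> set (rights (gplus Q Q))" using 2(1) by (simp add: rights_plus)
    ultimately show False using right_not_le by blast
  qed
qed



lemma reduce: "\<exists>k' j'. cfrac k j = cfrac k' j' \<and> (of_int k / 2^j :: rat) = of_int k' / 2^j' \<and> (j' = 0 \<or> odd k')"
proof (induction j arbitrary: k)
  case 0
  then show ?case by blast
next
  case (Suc j)
  show ?case
  proof (cases "even k")
    case True
    obtain k' j' where h: "cfrac (k div 2) j = cfrac k' j'" "(of_int (k div 2) / 2^j :: rat) = of_int k' / 2^j'" "j' = 0 \<or> odd k'"
      using Suc.IH by blast
    have "(of_int k / 2^Suc j :: rat) = of_int (k div 2) / 2^j"
      using True by (auto elim!: evenE simp: field_simps)
    then show ?thesis using h True by auto
  next
    case False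
    then show ?thesis by blast
  qed
qed

lemma cint_pos: assumes "k > 0" shows "cint k = Game [cint (k-1)] []"
proof -
  have e: "nat k = Suc (nat (k-1))" using assms by simp
  show ?thesis using assms unfolding cint_def by (simp add: e)
qed

lemma cint_neg: assumes "k < 0" shows "cint k = Game [] [cint (k+1)]"
proof -
  have e: "nat (-k) = Suc (nat (-(k+1)))" using assms by simp
  show ?thesis
  proof (cases "k = -1")
    case True then show ?thesis unfolding cint_def by simp
  next
    case False then show ?thesis using assms unfolding cint_def by (simp add: e)
  qed
qed

lemma cint_zero: "cint 0 = Game [] []"
  unfolding cint_def by simp

lemma lefts_cint_np: "k \<le> 0 \<Longrightarrow> lefts (cint k) = []"
  by (cases "k = 0") (simp_all add: cint_zero cint_neg)

lemma rights_cint_nn: "k \<ge> 0 \<Longrightarrow> rights (cint k) = []"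
  by (cases "k = 0") (simp_all add: cint_zero cint_pos)

lemma lefts_red: "j = 0 \<or> odd k \<Longrightarrow> lefts (cfrac k j) = (if j = 0 \<and> k \<le> 0 then [] else [cfrac (k-1) j])"
  by (cases j) (auto simp: cint_pos cint_zero cint_neg lefts_cint_np rights_cint_nn)

lemma rights_red: "j = 0 \<or> odd k \<Longrightarrow> rights (cfrac k j) = (if j = 0 \<and> k \<ge> 0 then [] else [cfrac (k+1) j])"
  by (cases j) (auto simp: cint_pos cint_zero cint_neg lefts_cint_np rights_cint_nn)

lemma div_le_iff: fixes a b :: int shows "(of_int a / 2^n \<le> (of_int b / 2^n :: rat)) \<longleftrightarrow> a \<le> b"
  by (simp add: divide_le_cancel)

lemma div_lt_iff: fixes a b :: int shows "(of_int a / 2^n < (of_int b / 2^n :: rat)) \<longleftrightarrow> a < b"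
  by (simp add: divide_less_cancel)

lemma frac_scale: fixes k :: int shows "j \<le> i \<Longrightarrow> (of_int k / 2^j :: rat) = of_int (k * 2^(i-j)) / 2^i"
proof -
  assume "j \<le> i"
  then have "(2::rat)^i = 2^j * 2^(i-j)" by (simp add: power_add[symmetric])
  then show ?thesis by simp
qed

lemma simplicity:
  fixes k l :: int and i j :: nat
  assumes "j = 0 \<or> odd k" "i = 0 \<or> odd l" "(of_int l / 2^i :: rat) < of_int k / 2^j"
  shows "(\<not>(j = 0 \<and> k \<le> 0) \<and> of_int l / 2^i \<le> (of_int (k-1) / 2^j :: rat)) \<or>
         (\<not>(i = 0 \<and> l \<ge> 0) \<and> of_int (l+1) / 2^i \<le> (of_int k / 2^j :: rat))"
proof (cases "j \<le> i")
  case True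
  have e1: "(of_int k / 2^j :: rat) = of_int (k * 2^(i-j)) / 2^i" using frac_scale[OF True] .
  have lt: "l < k * 2^(i-j)" using assms(3) unfolding e1 div_lt_iff .
  show ?thesis
  proof (cases "i = 0 \<and> l \<ge> 0")
    case True
    with \<open>j \<le> i\<close> have "j = 0" by simp
    then have "l < k" using lt True by simp
    then show ?thesis using True \<open>j = 0\<close> div_le_iff[where a=l and b="k-1" and n=0] by simp
  next
    case False
    have "l + 1 \<le> k * 2^(i-j)" using lt by simp
    then show ?thesis using False unfolding e1 div_le_iff by simp
  qed
next
  case False
  then have ij: "i \<le> j" "j \<noteq> 0" by auto
  have e1: "(of_int l / 2^i :: rat) = of_int (l * 2^(j-i)) / 2^j" using frac_scale[OF ij(1)] .
  have lt: "l * 2^(j-i) < k" using assms(3) unfolding e1 div_lt_iff .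
  have ev: "even (l * 2^(j-i))" using False by simp
  have ok: "odd k" using assms(1) ij(2) by simp
  have "l * 2^(j-i) \<noteq> k" using ev ok by auto
  then have "l * 2^(j-i) \<le> k - 1" using lt by simp
  then show ?thesis using ij(2) unfolding e1 div_le_iff by simp
qed

definition cfv :: "game \<Rightarrow> rat \<Rightarrow> bool" where
  "cfv G x \<longleftrightarrow> (\<exists>k j. G = cfrac k j \<and> x = of_int k / 2^j)"

lemma cfv_red: "cfv G x \<Longrightarrow> \<exists>k j. G = cfrac k j \<and> x = of_int k / 2^j \<and> (j = 0 \<or> odd k)"
  unfolding cfv_def using reduce by metis

lemma cf_le_aux: "size G + size H = n \<Longrightarrow> cfv G x \<Longrightarrow> cfv H y \<Longrightarrow> gle G H \<longleftrightarrow> x \<le> y"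
proof (induction n arbitrary: G H x y rule: less_induct)
  case (less n)
  obtain k j where G: "G = cfrac k j" "x = of_int k / 2^j" "j = 0 \<or> odd k"
    using cfv_red[OF less.prems(2)] by blast
  obtain l i where H: "H = cfrac l i" "y = of_int l / 2^i" "i = 0 \<or> odd l"
    using cfv_red[OF less.prems(3)] by blast
  have GL: "lefts G = (if j = 0 \<and> k \<le> 0 then [] else [cfrac (k-1) j])" using G lefts_red by simp
  have HR: "rights H = (if i = 0 \<and> l \<ge> 0 then [] else [cfrac (l+1) i])" using H rights_red by simp
  have vGL: "cfv (cfrac (k-1) j) (of_int (k-1) / 2^j)" unfolding cfv_def by blast
  have vHR: "cfv (cfrac (l+1) i) (of_int (l+1) / 2^i)" unfolding cfv_def by blast
  have ltGL: "(of_int (k-1) / 2^j :: rat) < x" using G(2) div_lt_iff[where a="k-1" and b=k and n=j] by simp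
  have ltHR: "y < (of_int (l+1) / 2^i :: rat)" using H(2) div_lt_iff[where a=l and b="l+1" and n=i] by simp
  show ?case
  proof
    assume le: "gle G H"
    show "x \<le> y"
    proof (rule ccontr)
      assume "\<not> x \<le> y"
      then have "y < x" by simp
      then have "(\<not>(j = 0 \<and> k \<le> 0) \<and> y \<le> (of_int (k-1) / 2^j :: rat)) \<or>
         (\<not>(i = 0 \<and> l \<ge> 0) \<and> of_int (l+1) / 2^i \<le> x)"
        using simplicity[OF G(3) H(3)] G(2) H(2) by simp
      then show False
      proof
        assume a: "\<not>(j = 0 \<and> k \<le> 0) \<and> y \<le> (of_int (k-1) / 2^j :: rat)"
        then have m: "cfrac (k-1) j \<in> set (lefts G)" using GL by simp
        have "gle H (cfrac (k-1) j)"
          using less.IH[OF _ refl less.prems(3) vGL] size_left[OF m] less.prems(1) a by simp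
        then show False using le m by (subst (asm) gle_unfold) auto
      next
        assume a: "\<not>(i = 0 \<and> l \<ge> 0) \<and> of_int (l+1) / 2^i \<le> x"
        then have m: "cfrac (l+1) i \<in> set (rights H)" using HR by simp
        have "gle (cfrac (l+1) i) G"
          using less.IH[OF _ refl vHR less.prems(2)] size_right[OF m] less.prems(1) a by simp
        then show False using le m by (subst (asm) gle_unfold) auto
      qed
    qed
  next
    assume le: "x \<le> y"
    show "gle G H"
    proof (subst gle_unfold, intro conjI ballI notI)
      fix gl assume m: "gl \<in> set (lefts G)" and b: "gle H gl"
      have e: "gl = cfrac (k-1) j" using m GL by (simp split: if_splits)
      have "y \<le> of_int (k-1) / 2^j"
        using less.IH[OF _ refl less.prems(3) vGL] size_left[OF m] less.prems(1) b e by simp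
      then show False using ltGL le by simp
    next
      fix hr assume m: "hr \<in> set (rights H)" and b: "gle hr G"
      have e: "hr = cfrac (l+1) i" using m HR by (simp split: if_splits)
      have "of_int (l+1) / 2^i \<le> x"
        using less.IH[OF _ refl vHR less.prems(2)] size_right[OF m] less.prems(1) b e by simp
      then show False using ltHR le by simp
    qed
  qed
qed

lemma cf_numlike:
  assumes "cfv C x"
  shows "(\<forall>l\<in>set (lefts C). gle l C) \<and> (\<forall>r\<in>set (rights C). gle C r)"
proof -
  obtain k j where G: "C = cfrac k j" "x = of_int k / 2^j" "j = 0 \<or> odd k"
    using cfv_red[OF assms] by blast
  have GL: "lefts C = (if j = 0 \<and> k \<le> 0 then [] else [cfrac (k-1) j])" using G lefts_red by simp
  have GR: "rights C = (if j = 0 \<and> k \<ge> 0 then [] else [cfrac (k+1) j])" using G rights_red by simp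
  have v1: "cfv (cfrac (k-1) j) (of_int (k-1) / 2^j)" unfolding cfv_def by blast
  have v2: "cfv (cfrac (k+1) j) (of_int (k+1) / 2^j)" unfolding cfv_def by blast
  have l1: "(of_int (k-1) / 2^j :: rat) \<le> x" using G(2) div_le_iff[where a="k-1" and b=k and n=j] by simp
  have l2: "x \<le> (of_int (k+1) / 2^j :: rat)" using G(2) div_le_iff[where a=k and b="k+1" and n=j] by simp
  have "gle (cfrac (k-1) j) C" using cf_le_aux[OF refl v1 assms] l1 by simp
  moreover have "gle C (cfrac (k+1) j)" using cf_le_aux[OF refl assms v2] l2 by simp
  ultimately show ?thesis using GL GR by auto
qed

lemma canon_cfv: "cfv (canon m) (of_int \<lfloor>m * 2 ^ dyadic_exp m\<rfloor> / 2 ^ dyadic_exp m)"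
  unfolding canon_def cfv_def by blast


theorem lemma2p9:
  fixes m \<Delta> :: rat
  assumes "is_dyadic m" and "is_dyadic \<Delta>"
    and "is_number (ball m \<Delta>)"
    and "balanced m \<Delta>"
  shows "geq (ball m \<Delta>) (canon m)"
proof -
  have nB: "numlike (ball m \<Delta>)" using assms(3) unfolding is_number_def numlike_def glt_def by auto
  have nC: "numlike (canon m)" using cf_numlike[OF canon_cfv] unfolding numlike_def .
  have s1: "gle (gplus (ball m \<Delta>) (ball m \<Delta>)) (gplus (canon m) (canon m))"
   and s2: "gle (gplus (canon m) (canon m)) (gplus (ball m \<Delta>) (ball m \<Delta>))"
    using assms(4) unfolding balanced_def geq_def by auto
  show ?thesis unfolding geq_def using key[OF nB nC s1] key[OF nC nB s2] by simp
qed

end
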